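(* Let $C\subset\mathbb{R}^d$ be a cone and let $D$ be a $d$-dimensional subcone of $C$ such that for every $f$-subcone $S$ of $C$ either $D\subset S$ or $\operatorname{int}(D)\cap\operatorname{int}(S)=\emptyset$. Let $G_D$ be the intersection of the groups $\Gamma(S)$ over all $f$-subcones $S$ of $C$ with $S\supset D$, and $H_D$ the union of these groups. Then $D$ is $f$-covered (every element of $D\cap\mathbb{Z}^d$ is $f$-covered) if and only if every residue class of $\mathbb{Z}^d$ modulo $G_D$ meets $H_D$.
   Context: A cone is a subset $C\subset\mathbb{R}^d$ of the form $\mathbb{R}_+x_1+\dots+\mathbb{R}_+x_n$ with $x_i\in\mathbb{Z}^d$, assumed pointed ($x,-x\in C\Rightarrow x=0$) and of full dimension $d$; a subcone is a cone contained in $C$. $\operatorname{Hilb}(C)$ denotes the Hilbert basis of the monoid $C\cap\mathbb{Z}^d$, i.e. the set of nonzero elements of $C\cap\mathbb{Z}^d$ that cannot be written as $x+y$ with $x,y\in C\cap\mathbb{Z}^d$ both nonzero. An $f$-subcone of $C$ is a cone $S$ generated by $d$ linearly independent vectors $x_1,\dots,x_d\in\operatorname{Hilb}(C)$; for such $S$, $\Gamma(S)$ denotes the subgroup of $\mathbb{Z}^d$ generated by $x_1,\dots,x_d$ and $\Sigma(S)$ the submonoid of $\mathbb{Z}^d$ generated by $x_1,\dots,x_d$. An element $x\in C\cap\mathbb{Z}^d$ is $f$-covered if $x\in\Sigma(S)$ for some $f$-subcone $S$ of $C$; a subset of $C$ is $f$-covered if each of its lattice points is $f$-covered. (There are finitely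 many $f$-subcones, so $G_D$ has finite index when at least one $f$-subcone contains $D$; if none does, $G_D=\mathbb{Z}^d$ and $H_D=\emptyset$.) *)

theory Defs
  imports "HOL-Analysis.Analysis"
begin

text \<open>Ambient space: real^'n, so d = CARD('n). Lattice Z^d = integer-coordinate vectors.\<close>

definition lattice :: "(real^'n) set" where
  "lattice = {x. \<forall>i. x $ i \<in> \<int>}"

definition gen_cone :: "(real^'n) set \<Rightarrow> (real^'n) set" where
  "gen_cone X = {y. \<exists>c. (\<forall>x\<in>X. c x \<ge> 0) \<and> y = (\<Sum>x\<in>X. c x *\<^sub>R x)}"

definition is_cone :: "(real^'n) set \<Rightarrow> bool" where
  "is_cone C \<longleftrightarrow> (\<exists>X. finite X \<and> X \<subseteq> lattice \<and> C = gen_cone X)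
     \<and> (\<forall>x. x \<in> C \<and> - x \<in> C \<longrightarrow> x = 0)
     \<and> dim C = CARD('n)"

definition subcone :: "(real^'n) set \<Rightarrow> (real^'n) set \<Rightarrow> bool" where
  "subcone D C \<longleftrightarrow> is_cone D \<and> D \<subseteq> C"

definition Hilb :: "(real^'n) set \<Rightarrow> (real^'n) set" where
  "Hilb C = {x \<in> C \<inter> lattice. x \<noteq> 0 \<and>
      \<not> (\<exists>y z. y \<in> C \<inter> lattice \<and> z \<in> C \<inter> lattice \<and> y \<noteq> 0 \<and> z \<noteq> 0 \<and> x = y + z)}"

definition f_gens :: "(real^'n) set \<Rightarrow> (real^'n) set \<Rightarrow> bool" where
  "f_gens C X \<longleftrightarrow> X \<subseteq> Hilb C \<and> card X = CARD('n) \<and> finite X \<and> independent X"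

definition f_subcone :: "(real^'n) set \<Rightarrow> (real^'n) set \<Rightarrow> bool" where
  "f_subcone C S \<longleftrightarrow> (\<exists>X. f_gens C X \<and> S = gen_cone X)"

definition Gamma :: "(real^'n) set \<Rightarrow> (real^'n) set" where
  "Gamma X = {y. \<exists>c::real^'n \<Rightarrow> int. y = (\<Sum>x\<in>X. of_int (c x) *\<^sub>R x)}"

definition Sigma_mon :: "(real^'n) set \<Rightarrow> (real^'n) set" where
  "Sigma_mon X = {y. \<exists>c::real^'n \<Rightarrow> nat. y = (\<Sum>x\<in>X. of_nat (c x) *\<^sub>R x)}"

definition f_covered_pt :: "(real^'n) set \<Rightarrow> real^'n \<Rightarrow> bool" where
  "f_covered_pt C x \<longleftrightarrow> (\<exists>X. f_gens C X \<and> x \<in> Sigma_mon X)"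

definition f_covered :: "(real^'n) set \<Rightarrow> (real^'n) set \<Rightarrow> bool" where
  "f_covered C A \<longleftrightarrow> (\<forall>x \<in> A \<inter> lattice. f_covered_pt C x)"

text \<open>G_D: intersection of Gamma(S) over f-subcones S containing D (= Z^d if there are none);
  H_D: union of these groups (empty if there are none).\<close>
definition G_D :: "(real^'n) set \<Rightarrow> (real^'n) set \<Rightarrow> (real^'n) set" where
  "G_D C D = lattice \<inter> \<Inter> {Gamma X | X. f_gens C X \<and> D \<subseteq> gen_cone X}"

definition H_D :: "(real^'n) set \<Rightarrow> (real^'n) set \<Rightarrow> (real^'n) set" where
  "H_D C D = \<Union> {Gamma X | X. f_gens C X \<and> D \<subseteq> gen_cone X}"

end

theory Submission
  imports Defs
begin

lemma lattice_iff: "x \<in> lattice \<longleftrightarrow> (\<forall>i. x $ i \<in> \<int>)"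
  by (simp add: lattice_def)

lemma lattice_0[simp]: "0 \<in> lattice"
  by (simp add: lattice_def)

lemma lattice_add: "x \<in> lattice \<Longrightarrow> y \<in> lattice \<Longrightarrow> x + y \<in> lattice"
  by (simp add: lattice_def)

lemma lattice_diff: "x \<in> lattice \<Longrightarrow> y \<in> lattice \<Longrightarrow> x - y \<in> lattice"
  by (simp add: lattice_def)

lemma lattice_neg: "x \<in> lattice \<Longrightarrow> - x \<in> lattice"
  by (simp add: lattice_def)

lemma lattice_scale: "x \<in> lattice \<Longrightarrow> k \<in> \<int> \<Longrightarrow> k *\<^sub>R x \<in> lattice"
  by (simp add: lattice_def)

lemma lattice_sum: "(\<And>i. i \<in> I \<Longrightarrow> f i \<in> lattice) \<Longrightarrow> sum f I \<in> lattice"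
  by (induction I rule: infinite_finite_induct) (auto intro: lattice_add)

lemma finite_lattice_ball: "finite (lattice \<inter> cball (0::real^'n) R)"
proof -
  define K where "K = \<lceil>R\<rceil>"
  have "lattice \<inter> cball (0::real^'n) R \<subseteq> (\<lambda>f. \<chi> i. of_int (f i)) ` (PiE UNIV (\<lambda>_. {-K..K}))"
  proof
    fix x :: "real^'n" assume x: "x \<in> lattice \<inter> cball 0 R"
    have "\<forall>i. \<exists>k. x $ i = of_int k" using x by (auto simp: lattice_def Ints_def)
    then obtain f where f: "\<And>i. x $ i = of_int (f i)" by metis
    have "\<bar>x $ i\<bar> \<le> R" for i using x component_le_norm_cart[of x i] by auto
    then have "f i \<in> {-K..K}" for i
    proof -
      have a: "real_of_int (f i) \<le> R" "- R \<le> real_of_int (f i)"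
        using f[of i] \<open>\<bar>x $ i\<bar> \<le> R\<close> by (auto simp: abs_le_iff)
      have "real_of_int (f i) \<le> real_of_int \<lceil>R\<rceil>" "real_of_int (- \<lceil>R\<rceil>) \<le> real_of_int (f i)"
        using a le_of_int_ceiling[of R] by linarith+
      then have "f i \<le> \<lceil>R\<rceil>" "- \<lceil>R\<rceil> \<le> f i" by (metis of_int_le_iff)+
      then show ?thesis unfolding K_def by auto
    qed
    then have "f \<in> PiE UNIV (\<lambda>_. {-K..K})" by auto
    moreover have "x = (\<chi> i. of_int (f i))" using f by (simp add: vec_eq_iff)
    ultimately show "x \<in> (\<lambda>f. \<chi> i. of_int (f i)) ` (PiE UNIV (\<lambda>_. {-K..K}))" by blast
  qed
  moreover have "finite (PiE (UNIV::'n set) (\<lambda>_. {-K..K}))" by (intro finite_PiE) auto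
  ultimately show ?thesis by (meson finite_imageI finite_subset)
qed

lemma gen_cone_sum:
  fixes X :: "(real^'n) set"
  assumes "finite X" "y \<in> gen_cone X"
  obtains c where "\<forall>x\<in>X. c x \<ge> 0" "y = (\<Sum>x\<in>X. c x *\<^sub>R x)"
  using assms by (auto simp: gen_cone_def)

lemma Hilb_finite:
  fixes C :: "(real^'n) set"
  assumes "is_cone C"
  shows "finite (Hilb C)"
proof -
  from assms obtain X0 where X0: "finite X0" "X0 \<subseteq> lattice" "C = gen_cone X0"
    by (auto simp: is_cone_def)
  define R where "R = (\<Sum>g\<in>X0. norm g)"
  have "Hilb C \<subseteq> X0 \<union> (lattice \<inter> cball 0 R)"
  proof
    fix y assume y: "y \<in> Hilb C"
    then have yC: "y \<in> C" and yl: "y \<in> lattice" and y0: "y \<noteq> 0" by (auto simp: Hilb_def)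
    obtain c where c: "\<forall>x\<in>X0. c x \<ge> 0" "y = (\<Sum>x\<in>X0. c x *\<^sub>R x)"
      using yC X0 by (auto simp: gen_cone_def)
    show "y \<in> X0 \<union> (lattice \<inter> cball 0 R)"
    proof (cases "\<exists>g\<in>X0. g \<noteq> 0 \<and> c g \<ge> 1")
      case True
      then obtain g where g: "g \<in> X0" "g \<noteq> 0" "c g \<ge> 1" by blast
      define c' where "c' x = (if x = g then c x - 1 else c x)" for x
      have "(\<Sum>x\<in>X0. c' x *\<^sub>R x) = (\<Sum>x\<in>X0. c x *\<^sub>R x) - (\<Sum>x\<in>X0. (if x = g then 1 else 0) *\<^sub>R x)"
        unfolding sum_subtractf[symmetric] by (intro sum.cong) (auto simp: c'_def algebra_simps)
      also have gsum: "(\<Sum>x\<in>X0. (if x = g then 1 else 0) *\<^sub>R x) = g"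
      proof -
        have "(\<Sum>x\<in>X0. (if x = g then 1 else 0) *\<^sub>R x) = (\<Sum>x\<in>X0. if x = g then g else 0)"
          by (intro sum.cong) auto
        then show ?thesis using g X0 by simp
      qed
      finally have "y - g = (\<Sum>x\<in>X0. c' x *\<^sub>R x)" using c by simp
      then have "y - g \<in> C"
        unfolding X0(3) gen_cone_def
      proof (intro CollectI exI[of _ c'] conjI)
        show "\<forall>x\<in>X0. 0 \<le> c' x" using c g by (auto simp: c'_def)
      qed
      moreover have "g \<in> C"
        unfolding X0(3) gen_cone_def
      proof (intro CollectI exI[of _ "\<lambda>x. if x = g then 1 else 0"] conjI)
        show "g = (\<Sum>x\<in>X0. (if x = g then 1 else 0) *\<^sub>R x)" using gsum by (rule sym)
      qed auto
      moreover have "y - g \<in> lattice" "g \<in> lattice" using X0 g yl by (auto intro: lattice_diff)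
      ultimately have a: "y - g \<in> C" "g \<in> C" "y - g \<in> lattice" "g \<in> lattice" by blast+
      have "y - g = 0"
      proof (rule ccontr)
        assume a5: "y - g \<noteq> 0"
        have e: "y = g + (y - g)" by simp
        have "\<exists>a b. a \<in> C \<inter> lattice \<and> b \<in> C \<inter> lattice \<and> a \<noteq> 0 \<and> b \<noteq> 0 \<and> y = a + b"
          using a a5 g(2) e by blast
        then show False using y unfolding Hilb_def by blast
      qed
      then show ?thesis using g by simp
    next
      case False
      have "norm y \<le> (\<Sum>x\<in>X0. norm (c x *\<^sub>R x))" unfolding c(2) by (rule norm_sum)
      also have "\<dots> \<le> R" unfolding R_def
      proof (rule sum_mono)
        fix x assume "x \<in> X0"
        then show "norm (c x *\<^sub>R x) \<le> norm x" using False c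
          by (cases "x = 0") (auto intro!: mult_left_le_one_le)
      qed
      finally show ?thesis using yl by auto
    qed
  qed
  then show ?thesis using X0 finite_lattice_ball by (meson finite_Un finite_subset)
qed

lemma rep_lin:
  fixes X :: "(real^'n) set"
  assumes "independent X" "span X = UNIV"
  shows "linear (\<lambda>v. representation X v b)"
  using linear_representation[OF assms, of b]
  by (simp add: linear_def module_hom_def Vector_Spaces.linear_def vector_space_def module_def module_hom_axioms_def)

lemma rep_cont:
  fixes X :: "(real^'n) set"
  assumes "independent X" "span X = UNIV"
  shows "continuous_on UNIV (\<lambda>v. representation X v b)"
  by (intro linear_continuous_on) (simp add: rep_lin[OF assms] flip: linear_conv_bounded_linear)

lemma fgens_props:
  fixes X :: "(real^'n) set"
  assumes "f_gens C X"
  shows "finite X" "independent X" "X \<subseteq> Hilb C" "X \<subseteq> lattice" "span X = UNIV"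
proof -
  show "finite X" "independent X" "X \<subseteq> Hilb C" using assms by (auto simp: f_gens_def)
  then show "X \<subseteq> lattice" by (auto simp: Hilb_def)
  have "dim X = card X" using \<open>independent X\<close> by (rule dim_eq_card_independent)
  also have "\<dots> = CARD('n)" using assms by (simp add: f_gens_def)
  finally have "dim X = DIM(real^'n)" by simp
  then show "span X = UNIV" by (simp only: dim_eq_full)
qed

lemma coef_unique:
  fixes X :: "(real^'n) set"
  assumes "finite X" "independent X" "(\<Sum>b\<in>X. a b *\<^sub>R b) = (\<Sum>b\<in>X. a' b *\<^sub>R b)" "b \<in> X"
  shows "a b = a' b"
proof (rule ccontr)
  assume ne: "a b \<noteq> a' b"
  have "(\<Sum>b\<in>X. (a b - a' b) *\<^sub>R b) = 0"
    using assms(3) by (simp add: scaleR_diff_left sum_subtractf)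
  then have "dependent X" using ne assms(1,4)
    by (subst dependent_finite[OF assms(1)]) (auto intro!: exI[of _ "\<lambda>b. a b - a' b"])
  then show False using assms(2) by simp
qed

lemma rep_sum:
  fixes X :: "(real^'n) set"
  assumes "finite X" "independent X" "span X = UNIV"
  shows "(\<Sum>b\<in>X. representation X v b *\<^sub>R b) = v"
  using sum_representation_eq[of X v X] assms by simp

lemma rep_coef:
  fixes X :: "(real^'n) set"
  assumes "finite X" "independent X" "span X = UNIV" "v = (\<Sum>b\<in>X. c b *\<^sub>R b)" "b \<in> X"
  shows "representation X v b = c b"
  using coef_unique[OF assms(1,2) _ assms(5), of "representation X v" c] rep_sum[OF assms(1-3), of v] assms(4)
  by simp

lemma Gamma_add: "y \<in> Gamma X \<Longrightarrow> z \<in> Gamma X \<Longrightarrow> y + z \<in> Gamma X"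
proof -
  assume "y \<in> Gamma X" "z \<in> Gamma X"
  then obtain c d where "y = (\<Sum>x\<in>X. of_int (c x) *\<^sub>R x)" "z = (\<Sum>x\<in>X. of_int (d x) *\<^sub>R x)"
    by (auto simp: Gamma_def)
  then have "y + z = (\<Sum>x\<in>X. of_int (c x + d x) *\<^sub>R x)"
    by (simp add: sum.distrib scaleR_add_left)
  then show ?thesis unfolding Gamma_def mem_Collect_eq by (rule exI[of _ "\<lambda>x. c x + d x"])
qed

lemma Gamma_scale: "y \<in> Gamma X \<Longrightarrow> of_int k *\<^sub>R y \<in> Gamma X"
proof -
  assume "y \<in> Gamma X"
  then obtain c where "y = (\<Sum>x\<in>X. of_int (c x) *\<^sub>R x)"
    by (auto simp: Gamma_def)
  then have "of_int k *\<^sub>R y = (\<Sum>x\<in>X. of_int (k * c x) *\<^sub>R x)"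
    by (simp add: scaleR_sum_right)
  then show ?thesis unfolding Gamma_def mem_Collect_eq by (rule exI[of _ "\<lambda>x. k * c x"])
qed

lemma Gamma_neg: "y \<in> Gamma X \<Longrightarrow> - y \<in> Gamma X"
  using Gamma_scale[of y X "-1"] by simp

lemma Gamma_diff: "y \<in> Gamma X \<Longrightarrow> z \<in> Gamma X \<Longrightarrow> y - z \<in> Gamma X"
  using Gamma_add[of y X "- z"] Gamma_neg[of z X] by simp

lemma Gamma_lattice: "X \<subseteq> lattice \<Longrightarrow> Gamma X \<subseteq> lattice"
  by (auto simp: Gamma_def intro!: lattice_sum lattice_scale)

lemma Sigma_Gamma: "Sigma_mon X \<subseteq> Gamma X"
proof
  fix y assume "y \<in> Sigma_mon X"
  then obtain c where "y = (\<Sum>x\<in>X. of_nat (c x) *\<^sub>R x)" by (auto simp: Sigma_mon_def)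
  then have "y = (\<Sum>x\<in>X. of_int (int (c x)) *\<^sub>R x)" by simp
  then show "y \<in> Gamma X" unfolding Gamma_def mem_Collect_eq by (rule exI[of _ "\<lambda>x. int (c x)"])
qed

lemma Nmult:
  fixes C :: "(real^'n) set"
  assumes "is_cone C"
  shows "\<exists>N::nat. N > 0 \<and> (\<forall>X. f_gens C X \<longrightarrow> (\<forall>z\<in>lattice. real N *\<^sub>R z \<in> Gamma X))"
proof -
  define R0 where "R0 = (\<Sum>b\<in>Hilb C. norm b)"
  define F where "F = lattice \<inter> cball (0::real^'n) R0"
  define M where "M = card F"
  have finF: "finite F" unfolding F_def by (rule finite_lattice_ball)
  have finH: "finite (Hilb C)" using assms by (rule Hilb_finite)
  have "\<forall>X. f_gens C X \<longrightarrow> (\<forall>z\<in>lattice. real (fact M) *\<^sub>R z \<in> Gamma X)"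
  proof (intro allI impI ballI)
    fix X and z :: "real^'n" assume X: "f_gens C X" and z: "z \<in> lattice"
    note XP = fgens_props[OF X]
    define fr where "fr v = (\<Sum>b\<in>X. frac (representation X v b) *\<^sub>R b)" for v
    have key: "v - fr v \<in> Gamma X \<and> fr v \<in> F" if v: "v \<in> lattice" for v
    proof -
      have "v - fr v = (\<Sum>b\<in>X. representation X v b *\<^sub>R b) - fr v"
        using rep_sum[OF XP(1,2,5)] by simp
      also have "\<dots> = (\<Sum>b\<in>X. of_int \<lfloor>representation X v b\<rfloor> *\<^sub>R b)"
        unfolding fr_def sum_subtractf[symmetric]
        by (intro sum.cong) (auto simp: frac_def algebra_simps)
      finally have g: "v - fr v \<in> Gamma X"
        unfolding Gamma_def mem_Collect_eq by (rule exI[of _ "\<lambda>b. \<lfloor>representation X v b\<rfloor>"])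
      then have "v - fr v \<in> lattice" using Gamma_lattice[OF XP(4)] by blast
      then have "v - (v - fr v) \<in> lattice" using v lattice_diff by blast
      then have l: "fr v \<in> lattice" by simp
      have "norm (fr v) \<le> (\<Sum>b\<in>X. norm (frac (representation X v b) *\<^sub>R b))"
        unfolding fr_def by (rule norm_sum)
      also have "\<dots> \<le> (\<Sum>b\<in>X. norm b)"
      proof (intro sum_mono)
        fix b
        have "frac (representation X v b) \<le> 1" "0 \<le> frac (representation X v b)"
          using frac_lt_1 frac_ge_0 less_imp_le by blast+
        then show "norm (frac (representation X v b) *\<^sub>R b) \<le> norm b"
          by (simp add: mult_left_le_one_le)
      qed
      also have "\<dots> \<le> R0" unfolding R0_def
        by (intro sum_mono2 finH XP(3)) auto
      finally show ?thesis using g l by (auto simp: F_def)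
    qed
    define f where "f k = fr (real k *\<^sub>R z)" for k :: nat
    have sl: "real k *\<^sub>R z \<in> lattice" for k :: nat
      using lattice_scale[OF z, of "real k"] by simp
    have fim: "f ` {0..M} \<subseteq> F"
      using key sl by (auto simp: f_def)
    have "\<not> inj_on f {0..M}"
    proof
      assume "inj_on f {0..M}"
      then have "card {0..M} \<le> card F" using card_inj_on_le[OF _ fim finF] by blast
      then show False by (simp add: M_def)
    qed
    then obtain i j where ij: "i \<in> {0..M}" "j \<in> {0..M}" "i \<noteq> j" "f i = f j"
      unfolding inj_on_def by blast
    have "\<exists>i j. i < j \<and> j \<le> M \<and> f i = f j"
    proof (cases "i < j")
      case True then show ?thesis using ij by auto
    next
      case False then show ?thesis using ij by (intro exI[of _ j] exI[of _ i]) auto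
    qed
    then obtain i j where ij: "i < j" "j \<le> M" "f i = f j" by blast
    define k where "k = j - i"
    have k: "1 \<le> k" "k \<le> M" using ij by (auto simp: k_def)
    have "(real j *\<^sub>R z - f j) - (real i *\<^sub>R z - f i) \<in> Gamma X"
      unfolding f_def by (rule Gamma_diff) (use key sl in blast)+
    moreover have "(real j *\<^sub>R z - f j) - (real i *\<^sub>R z - f i) = real k *\<^sub>R z"
      using ij by (simp add: k_def of_nat_diff algebra_simps)
    ultimately have kz: "real k *\<^sub>R z \<in> Gamma X" by simp
    have "k dvd fact M" using k by (intro dvd_fact) auto
    then obtain m where m: "fact M = k * m" by (auto elim: dvdE)
    have e: "real (fact M) *\<^sub>R z = of_int (int m) *\<^sub>R (real k *\<^sub>R z)"
      by (simp add: m)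
    show "real (fact M) *\<^sub>R z \<in> Gamma X"
      by (subst e) (rule Gamma_scale[OF kz])
  qed
  then show ?thesis by (intro exI[of _ "fact M"]) auto
qed

lemma rep_kernel_negligible:
  fixes X :: "(real^'n) set"
  assumes "f_gens C X" "b \<in> X"
  shows "negligible {v. representation X v b = 0}"
proof -
  note XP = fgens_props[OF assms(1)]
  define S where "S = {v::real^'n. representation X v b = 0}"
  have sub: "subspace S" unfolding S_def
    using linear_subspace_kernel[OF rep_lin[OF XP(2,5), of b]] by simp
  have bS: "b \<notin> S" using representation_basis[OF XP(2) assms(2)] by (simp add: S_def)
  have sS: "span S = S" using sub by (simp only: span_eq_iff)
  have "span S \<noteq> UNIV" using bS sS by (metis UNIV_I)
  then have "dim S \<noteq> DIM(real^'n)" by (simp only: dim_eq_full not_False_eq_True)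
  then have "dim S < DIM(real^'n)" using dim_subset_UNIV[of S] by linarith
  then show ?thesis unfolding S_def[symmetric] by (rule negligible_lowdim)
qed

lemma gen_cone_scale:
  fixes X :: "(real^'n) set"
  assumes "y \<in> gen_cone X" "t \<ge> 0"
  shows "t *\<^sub>R y \<in> gen_cone X"
proof -
  obtain c where c: "\<forall>x\<in>X. c x \<ge> 0" "y = (\<Sum>x\<in>X. c x *\<^sub>R x)" using assms by (auto simp: gen_cone_def)
  have "t *\<^sub>R y = (\<Sum>x\<in>X. (t * c x) *\<^sub>R x)" by (simp add: c scaleR_sum_right)
  moreover have "\<forall>x\<in>X. t * c x \<ge> 0" using c assms by auto
  ultimately show ?thesis unfolding gen_cone_def mem_Collect_eq by (intro exI[of _ "\<lambda>x. t * c x"]) auto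
qed

lemma gen_cone_convex:
  fixes X :: "(real^'n) set"
  shows "convex (gen_cone X)"
  unfolding convex_def
proof (intro ballI allI impI)
  fix y z :: "real^'n" and u v :: real
  assume yz: "y \<in> gen_cone X" "z \<in> gen_cone X" and uv: "0 \<le> u" "0 \<le> v" "u + v = 1"
  obtain c where c: "\<forall>x\<in>X. c x \<ge> 0" "y = (\<Sum>x\<in>X. c x *\<^sub>R x)" using yz by (auto simp: gen_cone_def)
  obtain d where d: "\<forall>x\<in>X. d x \<ge> 0" "z = (\<Sum>x\<in>X. d x *\<^sub>R x)" using yz by (auto simp: gen_cone_def)
  have "u *\<^sub>R y + v *\<^sub>R z = (\<Sum>x\<in>X. (u * c x + v * d x) *\<^sub>R x)"
    by (simp add: c d scaleR_sum_right sum.distrib scaleR_add_left)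
  moreover have "\<forall>x\<in>X. u * c x + v * d x \<ge> 0" using c d uv by auto
  ultimately show "u *\<^sub>R y + v *\<^sub>R z \<in> gen_cone X"
    unfolding gen_cone_def mem_Collect_eq by (intro exI[of _ "\<lambda>x. u * c x + v * d x"]) auto
qed

lemma gen_cone_0: "0 \<in> gen_cone X"
  unfolding gen_cone_def by (auto intro!: exI[of _ "\<lambda>x. 0"])

lemma cone_interior_nonempty:
  fixes D :: "(real^'n) set"
  assumes "is_cone D"
  shows "interior D \<noteq> {}"
proof -
  obtain X where X: "D = gen_cone X" using assms by (auto simp: is_cone_def)
  have cv: "convex D" and z: "0 \<in> D" using X gen_cone_convex gen_cone_0 by auto
  have "dim D = DIM(real^'n)" using assms by (simp add: is_cone_def)
  then have "span D = UNIV" by (simp only: dim_eq_full)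
  moreover have "affine hull D = span D" using z by (intro affine_hull_span_0 hull_inc)
  ultimately have "rel_interior D = interior D" by (intro rel_interior_interior) simp
  moreover have "rel_interior D \<noteq> {}" using cv z rel_interior_eq_empty by auto
  ultimately show ?thesis by simp
qed

theorem lemma3p1:
  fixes C D :: "(real^'n) set"
  assumes "is_cone C"
    and "subcone D C"
    and "\<forall>S. f_subcone C S \<longrightarrow> D \<subseteq> S \<or> interior D \<inter> interior S = {}"
  shows "f_covered C D \<longleftrightarrow>
         (\<forall>x \<in> lattice. \<exists>h \<in> H_D C D. x - h \<in> G_D C D)"
proof
  assume cov: "f_covered C D"
  show "\<forall>x \<in> lattice. \<exists>h \<in> H_D C D. x - h \<in> G_D C D"
  proof
    fix x :: "real^'n" assume x: "x \<in> lattice"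
    define Fam where "Fam = {X. f_gens C X}"
    have finFam: "finite Fam"
    proof (rule finite_subset)
      show "Fam \<subseteq> Pow (Hilb C)" by (auto simp: Fam_def f_gens_def)
      show "finite (Pow (Hilb C))" using Hilb_finite[OF assms(1)] by simp
    qed
    obtain N :: nat where N: "N > 0" "\<And>X z. f_gens C X \<Longrightarrow> z \<in> lattice \<Longrightarrow> real N *\<^sub>R z \<in> Gamma X"
      using Nmult[OF assms(1)] by blast
    have Dcone: "is_cone D" using assms(2) by (simp add: subcone_def)
    then obtain XD where XD: "D = gen_cone XD" by (auto simp: is_cone_def)
    define V where "V = interior D \<inter> (\<Inter>X\<in>Fam. \<Inter>b\<in>X. {v. representation X v b \<noteq> 0})"
    have openV: "open V" unfolding V_def
    proof (intro open_Int open_interior open_INT finFam ballI)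
      fix X assume "X \<in> Fam"
      then show "finite X" using fgens_props[of C X] by (auto simp: Fam_def)
    next
      fix X b assume "X \<in> Fam" "b \<in> X"
      then have XP: "finite X" "independent X" "span X = UNIV" using fgens_props[of C X] by (auto simp: Fam_def)
      show "open {v. representation X v b \<noteq> 0}"
        by (intro open_Collect_neq rep_cont[OF XP(2,3)] continuous_on_const)
    qed
    have "V \<noteq> {}"
    proof
      assume V0: "V = {}"
      define B where "B = (\<lambda>(X, b). {v. representation X v b = 0}) ` (SIGMA X:Fam. X)"
      have "finite B" unfolding B_def
        using finFam by (intro finite_imageI finite_SigmaI) (auto simp: Fam_def f_gens_def)
      moreover have "\<forall>T\<in>B. negligible T"
        unfolding B_def using rep_kernel_negligible by (auto simp: Fam_def)
      ultimately have "negligible (\<Union>B)" by (intro negligible_Union) auto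
      moreover have "interior D \<subseteq> \<Union>B"
      proof
        fix v assume v: "v \<in> interior D"
        then have "v \<notin> V" using V0 by simp
        then obtain X b where "X \<in> Fam" "b \<in> X" "representation X v b = 0"
          using v unfolding V_def by blast
        then show "v \<in> \<Union>B" unfolding B_def by auto
      qed
      ultimately have "negligible (interior D)" by (rule negligible_subset)
      then show False using open_not_negligible[OF open_interior cone_interior_nonempty[OF Dcone]] by simp
    qed
    then obtain q where q: "q \<in> V" by blast
    then obtain r where r: "r > 0" "ball q r \<subseteq> V" using openV open_contains_ball by blast
    have Vscale: "t *\<^sub>R v \<in> V" if v: "v \<in> V" and t: "t > 0" for t v
    proof -
      have "(*\<^sub>R) t ` interior D \<subseteq> D"
        using interior_subset[of D] t by (auto simp: XD intro!: gen_cone_scale)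
      moreover have "open ((*\<^sub>R) t ` interior D)" using t by (intro open_scaling) auto
      ultimately have "(*\<^sub>R) t ` interior D \<subseteq> interior D" by (rule interior_maximal)
      moreover have "t *\<^sub>R v \<in> (*\<^sub>R) t ` interior D" using v by (auto simp: V_def)
      ultimately have i: "t *\<^sub>R v \<in> interior D" by blast
      have "representation X (t *\<^sub>R v) b \<noteq> 0" if "X \<in> Fam" "b \<in> X" for X b
      proof -
        have XP: "independent X" "span X = UNIV" using that fgens_props[of C X] by (auto simp: Fam_def)
        have "representation X (t *\<^sub>R v) b = t * representation X v b"
          using representation_scale[OF XP(1), of v t] XP(2) by simp
        then show ?thesis using v that t by (auto simp: V_def)
      qed
      then show ?thesis using i by (auto simp: V_def)
    qed
    define K where "K = real CARD('n) * real N"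
    define t where "t = K / r + 1"
    have K0: "K \<ge> 0" by (simp add: K_def)
    have t0: "t > 0" using r K0 by (simp add: t_def add_nonneg_pos)
    have tr: "t * r = K + r" using r by (simp add: t_def field_simps)
    define p where "p = t *\<^sub>R q"
    define w :: "real^'n" where "w = (\<chi> i. of_int \<lfloor>(p $ i - x $ i) / real N\<rfloor>)"
    define y where "y = x + real N *\<^sub>R w"
    have wl: "w \<in> lattice" by (simp add: w_def lattice_def)
    have yl: "y \<in> lattice" unfolding y_def using x wl by (intro lattice_add lattice_scale) auto
    have comp: "\<bar>(y - p) $ i\<bar> \<le> real N" for i
    proof -
      define a where "a = (p $ i - x $ i) / real N"
      have f1: "a - 1 < of_int \<lfloor>a\<rfloor>" "of_int \<lfloor>a\<rfloor> \<le> a" by linarith+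
      have "(y - p) $ i = x $ i + real N * of_int \<lfloor>a\<rfloor> - p $ i"
        by (simp add: y_def w_def a_def)
      moreover have "real N * a = p $ i - x $ i" using N by (simp add: a_def)
      moreover have "real N * (a - 1) \<le> real N * of_int \<lfloor>a\<rfloor>" "real N * of_int \<lfloor>a\<rfloor> \<le> real N * a"
        using f1 N by (auto intro!: mult_left_mono)
      ultimately show ?thesis by (auto simp: algebra_simps abs_le_iff)
    qed
    have "norm (y - p) \<le> (\<Sum>i\<in>UNIV. \<bar>(y - p) $ i\<bar>)" by (rule norm_le_l1_cart)
    also have "\<dots> \<le> (\<Sum>i\<in>(UNIV::'n set). real N)" by (intro sum_mono comp)
    also have "\<dots> = K" by (simp add: K_def)
    finally have "norm (y - p) < t * r" using tr r by simp
    then have "inverse t * norm (y - p) < r" using t0 by (simp add: field_simps)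
    moreover have "q - inverse t *\<^sub>R y = inverse t *\<^sub>R (p - y)"
      using t0 by (simp add: p_def algebra_simps)
    ultimately have "dist q (inverse t *\<^sub>R y) < r" using t0
      by (simp add: dist_norm norm_minus_commute)
    then have "inverse t *\<^sub>R y \<in> V" using r by auto
    then have "t *\<^sub>R (inverse t *\<^sub>R y) \<in> V" by (rule Vscale[OF _ t0])
    then have yV: "y \<in> V" using t0 by simp
    then have yiD: "y \<in> interior D" by (simp add: V_def)
    then have "y \<in> D \<inter> lattice" using yl interior_subset by blast
    then have "f_covered_pt C y" using cov by (simp add: f_covered_def)
    then obtain X c where X: "f_gens C X" and c: "y = (\<Sum>b\<in>X. of_nat (c b) *\<^sub>R b)"
      by (auto simp: f_covered_pt_def Sigma_mon_def)
    note XP = fgens_props[OF X]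
    have yS: "y \<in> Sigma_mon X" using c by (auto simp: Sigma_mon_def)
    have pos: "representation X y b > 0" if "b \<in> X" for b
    proof -
      have "representation X y b = of_nat (c b)" using rep_coef[OF XP(1,2,5) c that] .
      moreover have "representation X y b \<noteq> 0" using yV X that by (auto simp: V_def Fam_def)
      ultimately show ?thesis by simp
    qed
    define W where "W = (\<Inter>b\<in>X. {v. 0 < representation X v b})"
    have "open W" unfolding W_def
      by (intro open_INT XP(1) ballI open_Collect_less rep_cont[OF XP(2,5)] continuous_on_const)
    moreover have "W \<subseteq> gen_cone X"
    proof
      fix v assume "v \<in> W"
      then have "\<forall>b\<in>X. 0 \<le> representation X v b" by (auto simp: W_def less_imp_le)
      moreover have "v = (\<Sum>b\<in>X. representation X v b *\<^sub>R b)" using rep_sum[OF XP(1,2,5)] by simp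
      ultimately show "v \<in> gen_cone X"
        unfolding gen_cone_def mem_Collect_eq by (intro exI[of _ "representation X v"]) auto
    qed
    ultimately have "W \<subseteq> interior (gen_cone X)" by (simp add: interior_maximal)
    moreover have "y \<in> W" using pos by (auto simp: W_def)
    ultimately have "y \<in> interior D \<inter> interior (gen_cone X)" using yiD by blast
    moreover have "f_subcone C (gen_cone X)" using X by (auto simp: f_subcone_def)
    ultimately have DS: "D \<subseteq> gen_cone X" using assms(3) by blast
    have "y \<in> H_D C D" unfolding H_D_def using X DS yS Sigma_Gamma by blast
    moreover have "x - y \<in> G_D C D"
    proof -
      have e: "x - y = - (real N *\<^sub>R w)" by (simp add: y_def)
      have "x - y \<in> lattice" using x yl by (rule lattice_diff)
      moreover have "x - y \<in> Gamma X'" if "f_gens C X'" for X'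
        unfolding e using N(2)[OF that wl] by (rule Gamma_neg)
      ultimately show ?thesis unfolding G_D_def by blast
    qed
    ultimately show "\<exists>h \<in> H_D C D. x - h \<in> G_D C D" by blast
  qed
next
  assume R: "\<forall>x \<in> lattice. \<exists>h \<in> H_D C D. x - h \<in> G_D C D"
  show "f_covered C D" unfolding f_covered_def
  proof
    fix x assume xD: "x \<in> D \<inter> lattice"
    then obtain h where h: "h \<in> H_D C D" "x - h \<in> G_D C D" using R by blast
    then obtain X where X: "f_gens C X" "D \<subseteq> gen_cone X" "h \<in> Gamma X"
      by (auto simp: H_D_def)
    note XP = fgens_props[OF X(1)]
    have "x - h \<in> Gamma X" using h(2) X by (auto simp: G_D_def)
    then have "(x - h) + h \<in> Gamma X" using X(3) by (rule Gamma_add)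
    then obtain c where c: "x = (\<Sum>b\<in>X. of_int (c b) *\<^sub>R b)" by (auto simp: Gamma_def)
    have "x \<in> gen_cone X" using xD X by auto
    then obtain c' where c': "\<forall>b\<in>X. c' b \<ge> 0" "x = (\<Sum>b\<in>X. c' b *\<^sub>R b)"
      by (auto simp: gen_cone_def)
    have "of_int (c b) = c' b" if "b \<in> X" for b
      using coef_unique[OF XP(1,2) _ that, of "\<lambda>b. of_int (c b)" c'] c c' by simp
    then have nn: "c b \<ge> 0" if "b \<in> X" for b using c' that by fastforce
    have "x = (\<Sum>b\<in>X. of_nat (nat (c b)) *\<^sub>R b)"
      unfolding c by (intro sum.cong) (auto simp: nn)
    then have "x \<in> Sigma_mon X" unfolding Sigma_mon_def mem_Collect_eq
      by (rule exI[of _ "\<lambda>b. nat (c b)"])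
    then show "f_covered_pt C x" using X(1) by (auto simp: f_covered_pt_def)
  qed
qed

end
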